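(* Let $0\le b\le 1$ and $0\le\alpha<1$, and let $r_0=r_0(\alpha)$ be the real root in $(0,1)$ of the equation \[1-\alpha+(1+\alpha)r=2\big(1-\alpha+(2-\alpha)(1-b)r\big)(1-r)^3.\] Let $\mathcal{F}$ be the class of functions $f\in\mathcal{A}_b$, $f(z)=z+\sum_{n\ge2}a_nz^n$, with $|a_n|\le n$ for all $n\ge3$. Then: (i) every $f\in\mathcal{F}$ satisfies $\left|\frac{zf'(z)}{f(z)}-1\right|\le 1-\alpha$ for $|z|\le r_0$; (ii) $r_0(\alpha)$ is the radius of starlikeness of order $\alpha$ of $\mathcal{F}$; (iii) $r_0(1/2)$ is the radius of parabolic starlikeness of $\mathcal{F}$. All results are sharp: the function $f_0(z)=2z+2(1-b)z^2-\frac{z}{(1-z)^2}=z-2bz^2-\sum_{n\ge3}nz^n$ belongs to $\mathcal{F}$ and satisfies $\left|\frac{zf_0'(z)}{f_0(z)}-1\right|=1-\alpha$ and $\operatorname{Re}\frac{zf_0'(z)}{f_0(z)}=\alpha$ at $z=r_0$.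
   Context: $\mathbb{D}=\{z\in\mathbb{C}:|z|<1\}$. For $0\le b\le1$, $\mathcal{A}_b$ is the class of analytic functions $f$ on $\mathbb{D}$ of the form $f(z)=z+a_2z^2+a_3z^3+\cdots$ with $|a_2|=2b$. For a class $\mathcal{F}$ of analytic functions on $\mathbb{D}$ normalized by $f(0)=0$, $f'(0)=1$, and $0\le\alpha<1$, the radius of starlikeness of order $\alpha$ of $\mathcal{F}$ is the supremum of $r\in(0,1]$ such that every $f\in\mathcal{F}$ satisfies $f(z)\ne0$ for $0<|z|<r$ and $\operatorname{Re}\big(zf'(z)/f(z)\big)>\alpha$ for $|z|<r$ (the quotient being $1$ at $z=0$). The radius of parabolic starlikeness of $\mathcal{F}$ is the supremum of $r\in(0,1]$ such that every $f\in\mathcal{F}$ satisfies $\operatorname{Re}\big(zf'(z)/f(z)\big)>\left|zf'(z)/f(z)-1\right|$ for $|z|<r$. *)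

theory Defs
  imports "HOL-Analysis.Analysis"
begin

definition taylor_coeff :: "(complex \<Rightarrow> complex) \<Rightarrow> nat \<Rightarrow> complex" where
  "taylor_coeff f n = (deriv ^^ n) f 0 / of_nat (fact n)"

definition class_A :: "real \<Rightarrow> (complex \<Rightarrow> complex) set" where
  "class_A b = {f. f holomorphic_on ball 0 1 \<and> f 0 = 0 \<and> deriv f 0 = 1
                   \<and> norm (taylor_coeff f 2) = 2 * b}"

definition class_F :: "real \<Rightarrow> (complex \<Rightarrow> complex) set" where
  "class_F b = {f \<in> class_A b. \<forall>n\<ge>3. norm (taylor_coeff f n) \<le> real n}"

definition starq :: "(complex \<Rightarrow> complex) \<Rightarrow> complex \<Rightarrow> complex" where
  "starq f z = (if z = 0 then 1 else z * deriv f z / f z)"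

definition radius_starlike_order :: "(complex \<Rightarrow> complex) set \<Rightarrow> real \<Rightarrow> real" where
  "radius_starlike_order F \<alpha> = Sup {r. 0 < r \<and> r \<le> 1 \<and>
     (\<forall>f\<in>F. (\<forall>z. 0 < norm z \<and> norm z < r \<longrightarrow> f z \<noteq> 0) \<and>
             (\<forall>z. norm z < r \<longrightarrow> Re (starq f z) > \<alpha>))}"

definition radius_parabolic :: "(complex \<Rightarrow> complex) set \<Rightarrow> real" where
  "radius_parabolic F = Sup {r. 0 < r \<and> r \<le> 1 \<and>
     (\<forall>f\<in>F. \<forall>z. norm z < r \<longrightarrow> Re (starq f z) > norm (starq f z - 1))}"

definition root_r0 :: "real \<Rightarrow> real \<Rightarrow> real" where
  "root_r0 b \<alpha> = (THE r. 0 < r \<and> r < 1 \<and>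
     1 - \<alpha> + (1 + \<alpha>) * r = 2 * (1 - \<alpha> + (2 - \<alpha>) * (1 - b) * r) * (1 - r) ^ 3)"

definition f0 :: "real \<Rightarrow> complex \<Rightarrow> complex" where
  "f0 b z = 2 * z + 2 * complex_of_real (1 - b) * z ^ 2 - z / (1 - z) ^ 2"

end

theory Submission
  imports Defs "HOL-Complex_Analysis.Complex_Analysis"
begin


definition den :: "real \<Rightarrow> real \<Rightarrow> real" where
  "den b r = (2 + 2*(1-b)*r)*(1-r)^3 - (1-r)"
definition num :: "real \<Rightarrow> real \<Rightarrow> real" where
  "num b r = (2 + 4*(1-b)*r)*(1-r)^3 - (1+r)"
definition hf :: "real \<Rightarrow> real \<Rightarrow> real \<Rightarrow> real" where
  "hf b a r = 2 * (1 - a + (2 - a) * (1 - b) * r) * (1 - r) ^ 3 - (1 - a + (1 + a) * r)"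

lemma hf_eq: "hf b a r = num b r - a * den b r"
  unfolding hf_def num_def den_def by (simp add: algebra_simps)

lemma hf_deriv_neg:
  fixes a b x :: real
  assumes "0 \<le> b" "b \<le> 1" "0 \<le> a" "a < 1" "0 \<le> x" "x \<le> 1"
  shows "2*(2-a)*(1-b)*(1-x)^3 - 6*(1 - a + (2 - a) * (1 - b) * x)*(1-x)^2 - (1+a) < 0"
proof -
  define u where "u = 1 - x"
  define B where "B = (2-a)*(1-b)"
  have u: "0 \<le> u" "u \<le> 1" using assms by (auto simp: u_def)
  have B: "0 \<le> B" "B \<le> 2 - a" using assms by (auto simp: B_def mult_left_le)
  have u32: "u^3 \<le> u^2" using u by (simp add: power_decreasing)
  have "2*B*u^3 \<le> 2*B*u^2" using u32 B by (simp add: mult_left_mono)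
  moreover have "0 \<le> B*x*u^2" using B assms by simp
  moreover have "(2*B - 6*(1-a))*u^2 \<le> max 0 (2*B - 6*(1-a))"
  proof (cases "2*B - 6*(1-a) \<le> 0")
    case True then show ?thesis by (simp add: mult_nonpos_nonneg)
  next
    case False
    have "u^2 \<le> 1" using u by (simp add: power_le_one)
    then show ?thesis using False by (simp add: mult_left_le)
  qed
  moreover have "max 0 (2*B - 6*(1-a)) - (1+a) < 0" using B assms by auto
  moreover have eqq: "2*B*u^3 - 6*(1 - a + B*x)*u^2 - (1+a) = 2*B*u^3 + (2*B - 6*(1-a))*u^2 - 2*B*u^2 - 6*(B*x*u^2) - (1+a)"
      by (simp add: algebra_simps)
  ultimately have "2*B*u^3 - 6*(1 - a + B*x)*u^2 - (1+a) < 0"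
    by linarith
  then show ?thesis by (simp add: u_def B_def algebra_simps)
qed

lemma hf_decreasing:
  assumes "0 \<le> b" "b \<le> 1" "0 \<le> a" "a < 1" "0 \<le> x" "x < y" "y \<le> 1"
  shows "hf b a y < hf b a x"
proof (rule DERIV_neg_imp_decreasing[OF \<open>x < y\<close>])
  fix t assume t: "x \<le> t" "t \<le> y"
  show "\<exists>d. DERIV (hf b a) t :> d \<and> d < 0"
    apply (rule exI[of _ "2*(2-a)*(1-b)*(1-t)^3 - 6*(1 - a + (2 - a) * (1 - b) * t)*(1-t)^2 - (1+a)"])
    apply (rule conjI)
    unfolding hf_def
     apply (rule derivative_eq_intros refl | simp)+
     apply (simp add: algebra_simps power2_eq_square power3_eq_cube)
    using hf_deriv_neg[of b a t] assms t by auto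
qed

lemma root_props:
  assumes "0 \<le> b" "b \<le> 1" "0 \<le> a" "a < 1"
  shows "0 < root_r0 b a" "root_r0 b a < 1" "hf b a (root_r0 b a) = 0"
    "\<And>x. 0 \<le> x \<Longrightarrow> x < root_r0 b a \<Longrightarrow> hf b a x > 0"
    "\<And>x. root_r0 b a < x \<Longrightarrow> x \<le> 1 \<Longrightarrow> hf b a x < 0"
proof -
  have c: "continuous_on {0..1} (hf b a)" unfolding hf_def by (intro continuous_intros)
  have "hf b a 1 \<le> 0" "0 \<le> hf b a 0" using assms by (auto simp: hf_def)
  from IVT2'[OF this _ c] obtain r where r: "0 \<le> r" "r \<le> 1" "hf b a r = 0" by auto
  have r0: "r \<noteq> 0" using r assms by (auto simp: hf_def)
  have r1: "r \<noteq> 1" using r assms by (auto simp: hf_def)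
  have P: "0 < r \<and> r < 1 \<and> 1 - a + (1 + a) * r = 2 * (1 - a + (2 - a) * (1 - b) * r) * (1 - r) ^ 3"
    using r r0 r1 by (auto simp: hf_def)
  have U: "s = r" if "0 < s \<and> s < 1 \<and> 1 - a + (1 + a) * s = 2 * (1 - a + (2 - a) * (1 - b) * s) * (1 - s) ^ 3" for s
  proof -
    have hs: "hf b a s = 0" using that by (simp add: hf_def)
    show ?thesis
    proof (rule ccontr)
      assume "s \<noteq> r"
      then consider "s < r" | "r < s" by linarith
      then show False
        using hf_decreasing[OF assms, of s r] hf_decreasing[OF assms, of r s] that r hs by auto
    qed
  qed
  have eq: "root_r0 b a = r" unfolding root_r0_def using P U by (rule the_equality)
  show "0 < root_r0 b a" "root_r0 b a < 1" "hf b a (root_r0 b a) = 0" using P r eq by auto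
  show "hf b a x > 0" if "0 \<le> x" "x < root_r0 b a" for x
    using hf_decreasing[OF assms, of x r] that r eq by auto
  show "hf b a x < 0" if "root_r0 b a < x" "x \<le> 1" for x
    using hf_decreasing[OF assms, of r x] that r eq by auto
qed



lemma sums_S1:
  fixes r :: real assumes "0 \<le> r" "r < 1"
  shows "(\<lambda>n. real n * r^n) sums (r/(1-r)^2)"
proof -
  have "(\<lambda>n. of_nat (Suc n) * r ^ n) sums (1 / (1 - r)^2)"
    by (rule geometric_deriv_sums) (use assms in auto)
  from sums_mult[OF this, of r]
  have "(\<lambda>n. real (Suc n) * r ^ (Suc n)) sums (r/(1-r)^2)" by (simp add: algebra_simps)
  then show ?thesis by (subst (asm) sums_Suc_iff) simp
qed

lemma sums_Q:
  fixes r :: real assumes "0 \<le> r" "r < 1"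
  shows "(\<lambda>n. real n * (real n - 1) * r^n) sums (2*r^2/(1-r)^3)"
proof -
  have "(\<lambda>n. diffs (\<lambda>n. of_nat (Suc n)) n * r ^ n) sums (2/(1-r)^3)"
  proof (rule termdiffs_sums_strong[where K=1])
    fix z :: real assume "norm z < 1"
    then show "(\<lambda>n. of_nat (Suc n) * z ^ n) sums (1 / (1 - z)^2)"
      by (intro geometric_deriv_sums) auto
  next
    show "((\<lambda>z. 1 / (1 - z)^2) has_field_derivative (2/(1-r)^3)) (at r)"
    proof -
      have ne: "1 - r \<noteq> 0" using assms by auto
      show ?thesis
        apply (rule derivative_eq_intros refl)+
        using ne apply simp
        using ne apply (simp add: divide_simps)
        apply (simp add: algebra_simps power2_eq_square power3_eq_cube power4_eq_xxxx)
        done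
    qed
  qed (use assms in auto)
  hence "(\<lambda>n. real (Suc n) * real (Suc (Suc n)) * r ^ n) sums (2/(1-r)^3)"
    by (simp add: diffs_def)
  from sums_mult[OF this, of "r^2"]
  have "(\<lambda>n. real (Suc (Suc n)) * (real (Suc (Suc n)) - 1) * r ^ (Suc (Suc n))) sums (2*r^2/(1-r)^3)"
    by (simp add: algebra_simps power2_eq_square)
  then show ?thesis by (subst (asm) sums_Suc_iff, subst (asm) sums_Suc_iff) simp
qed



lemma taylor_sums:
  assumes "f holomorphic_on ball 0 1" "norm z < 1"
  shows "(\<lambda>n. taylor_coeff f n * z^n) sums f z"
  using holomorphic_power_series[OF assms(1), of z] assms(2)
  by (simp add: taylor_coeff_def)

lemma taylor_sums_deriv:
  assumes "f holomorphic_on ball 0 1" "norm z < 1"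
  shows "(\<lambda>n. of_nat n * taylor_coeff f n * z^n) sums (z * deriv f z)"
proof -
  have hd: "deriv f holomorphic_on ball 0 1"
    by (rule holomorphic_deriv[OF assms(1) open_ball])
  have s: "(\<lambda>n. (deriv ^^ n) (deriv f) 0 / fact n * z^n) sums deriv f z"
    using holomorphic_power_series[OF hd, of z] assms(2) by simp
  have eq: "of_nat (Suc n) * taylor_coeff f (Suc n) * z^(Suc n) = z * ((deriv ^^ n) (deriv f) 0 / fact n * z^n)" for n
  proof -
    have h1: "(deriv ^^ Suc n) f 0 = (deriv ^^ n) (deriv f) 0" by (metis funpow_Suc_right comp_apply)
    have h2: "(fact (Suc n) :: complex) = of_nat (Suc n) * fact n" by simp
    have h3: "(fact n :: complex) \<noteq> 0" by simp
    show ?thesis unfolding taylor_coeff_def h1 h2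
      using h3 by (simp add: field_simps h2 del: of_nat_Suc fact_Suc)
  qed
  have "(\<lambda>n. of_nat (Suc n) * taylor_coeff f (Suc n) * z^(Suc n)) sums (z * deriv f z)"
    unfolding eq by (rule sums_mult[OF s])
  then show ?thesis by (subst (asm) sums_Suc_iff) simp
qed



lemma classF_facts:
  assumes "f \<in> class_F b"
  shows "f holomorphic_on ball 0 1" "taylor_coeff f 0 = 0" "taylor_coeff f 1 = 1"
    "norm (taylor_coeff f 2) = 2*b" "\<And>n. n \<ge> 3 \<Longrightarrow> norm (taylor_coeff f n) \<le> real n"
  using assms by (auto simp: class_F_def class_A_def taylor_coeff_def)

lemma est1:
  assumes f: "f \<in> class_F b" and b: "0 \<le> b" "b \<le> 1" and z: "norm z < 1"
  shows "norm (f z - z) \<le> norm z/(1-norm z)^2 - norm z - (2-2*b)*(norm z)^2"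
proof -
  define r where "r = norm z"
  have r: "0 \<le> r" "r < 1" using z by (auto simp: r_def)
  note F = classF_facts[OF f]
  have F1: "taylor_coeff f (Suc 0) = 1" using F(3) by simp
  define e where "e n = taylor_coeff f n * z^n - (if n = 1 then z else 0)" for n
  have es: "e sums (f z - z)"
    unfolding e_def
    by (intro sums_diff taylor_sums[OF F(1) z]) (use sums_single[of 1 "\<lambda>_. z"] in simp)
  define g where "g n = real n * r^n - (if n = 1 then r else 0) - (if n = 2 then (2-2*b)*r^2 else 0)" for n
  have gs: "g sums (r/(1-r)^2 - r - (2-2*b)*r^2)"
    unfolding g_def
    by (intro sums_diff sums_S1[OF r]) (rule sums_single[of _ "\<lambda>_. _", simplified])+
  have bound: "norm (e n) \<le> g n" for n
  proof -
    consider "n = 0" | "n = 1" | "n = 2" | "n \<ge> 3" by linarith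
    then show ?thesis
    proof cases
      case 4
      have "norm (e n) = norm (taylor_coeff f n) * r^n" using 4 by (simp add: e_def norm_mult norm_power r_def)
      also have "\<dots> \<le> real n * r^n" using F(5)[OF 4] r by (intro mult_right_mono) auto
      finally show ?thesis using 4 by (simp add: g_def)
    qed (auto simp: e_def g_def F F1 norm_mult norm_power r_def algebra_simps)
  qed
  have "norm (f z - z) = norm (suminf e)" using es by (metis sums_unique)
  also have "\<dots> \<le> suminf g" by (rule norm_suminf_le[OF bound sums_summable[OF gs]])
  also have "\<dots> = r/(1-r)^2 - r - (2-2*b)*r^2" using gs by (metis sums_unique)
  finally show ?thesis by (simp add: r_def)
qed

lemma est2:
  assumes f: "f \<in> class_F b" and b: "0 \<le> b" "b \<le> 1" and z: "norm z < 1"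
  shows "norm (z * deriv f z - f z) \<le> 2*(norm z)^2/(1-norm z)^3 - (2-2*b)*(norm z)^2"
proof -
  define r where "r = norm z"
  have r: "0 \<le> r" "r < 1" using z by (auto simp: r_def)
  note F = classF_facts[OF f]
  define e where "e n = (of_nat n - 1) * taylor_coeff f n * z^n" for n
  have es: "e sums (z * deriv f z - f z)"
  proof -
    have "(\<lambda>n. of_nat n * taylor_coeff f n * z^n - taylor_coeff f n * z^n) sums (z * deriv f z - f z)"
      by (intro sums_diff taylor_sums[OF F(1) z] taylor_sums_deriv[OF F(1) z])
    then show ?thesis unfolding e_def by (simp add: algebra_simps)
  qed
  define g where "g n = real n * (real n - 1) * r^n - (if n = 2 then (2-2*b)*r^2 else 0)" for n
  have gs: "g sums (2*r^2/(1-r)^3 - (2-2*b)*r^2)"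
    unfolding g_def
    by (intro sums_diff sums_Q[OF r]) (rule sums_single[of _ "\<lambda>_. _", simplified])
  have bound: "norm (e n) \<le> g n" for n
  proof -
    consider "n = 0" | "n = 1" | "n = 2" | "n \<ge> 3" by linarith
    then show ?thesis
    proof cases
      case 4
      have nn: "norm (of_nat n - 1 :: complex) = real n - 1"
      proof -
        have "(of_nat n - 1 :: complex) = of_nat (n - 1)" using 4 by (simp add: of_nat_diff)
        moreover have "norm (of_nat (n-1)::complex) = real (n-1)" by (rule norm_of_nat)
        moreover have "real (n-1) = real n - 1" using 4 by (simp add: of_nat_diff)
        ultimately show ?thesis by metis
      qed
      have "norm (e n) = (real n - 1) * norm (taylor_coeff f n) * r^n"
        using 4 by (simp add: e_def norm_mult norm_power r_def nn)
      also have "\<dots> \<le> (real n - 1) * real n * r^n" using F(5)[OF 4] r 4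
        by (intro mult_right_mono mult_left_mono) auto
      finally show ?thesis using 4 by (simp add: g_def algebra_simps)
    next
      case 3
      have nn: "(of_nat n - 1 :: complex) = 1" using 3 by simp
      show ?thesis using 3 by (simp add: e_def g_def F norm_mult norm_power r_def algebra_simps)
    qed (auto simp: e_def g_def F norm_mult norm_power r_def algebra_simps)
  qed
  have "norm (z * deriv f z - f z) = norm (suminf e)" using es by (metis sums_unique)
  also have "\<dots> \<le> suminf g" by (rule norm_suminf_le[OF bound sums_summable[OF gs]])
  also have "\<dots> = 2*r^2/(1-r)^3 - (2-2*b)*r^2" using gs by (metis sums_unique)
  finally show ?thesis by (simp add: r_def)
qed



lemma num_lt_den:
  fixes b r :: real
  assumes "0 \<le> b" "b \<le> 1" "0 < r" "r < 1"
  shows "num b r < den b r"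
proof -
  have c: "(1-r)^3 < 1" using assms by (simp add: power_less_one_iff)
  have "(1-b)*(1-r)^3 < 1"
  proof -
    have "(1-b)*(1-r)^3 \<le> 1 * (1-r)^3" using assms by (intro mult_right_mono) auto
    then show ?thesis using c by linarith
  qed
  hence "r * ((1-b)*(1-r)^3) < r * 1" using assms by (intro mult_strict_left_mono) auto
  moreover have "num b r - den b r = 2*(r*((1-b)*(1-r)^3)) - 2*r"
    by (simp add: num_def den_def algebra_simps)
  ultimately show ?thesis by linarith
qed

lemma den_pos:
  fixes a b r :: real
  assumes "0 \<le> b" "b \<le> 1" "0 \<le> a" "a < 1" "0 < r" "r < 1" "hf b a r \<ge> 0"
  shows "den b r > 0"
proof (rule ccontr)
  assume "\<not> den b r > 0"
  hence "(1-a) * den b r \<le> 0" using assms by (intro mult_nonneg_nonpos) auto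
  hence "a * den b r \<ge> den b r" by (simp add: algebra_simps)
  moreover have "num b r \<ge> a * den b r" using assms(7) by (simp add: hf_eq)
  ultimately show False using num_lt_den[OF assms(1,2,5,6)] by linarith
qed

lemma ratio_le:
  fixes a b r :: real
  assumes "den b r > 0" "hf b a r \<ge> 0"
  shows "1 - num b r / den b r \<le> 1 - a"
proof -
  have "a * den b r \<le> num b r" using assms(2) by (simp add: hf_eq)
  hence "a \<le> num b r / den b r" using assms(1) by (simp add: pos_le_divide_eq)
  thus ?thesis by linarith
qed

lemma ratio_lt:
  fixes a b r :: real
  assumes "den b r > 0" "hf b a r > 0"
  shows "1 - num b r / den b r < 1 - a"
proof -
  have "a * den b r < num b r" using assms(2) by (simp add: hf_eq)
  hence "a < num b r / den b r" using assms(1) by (simp add: pos_less_divide_eq)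
  thus ?thesis by linarith
qed

lemma est_main:
  assumes f: "f \<in> class_F b" and b: "0 \<le> b" "b \<le> 1" and z: "z \<noteq> 0" "norm z < 1"
    and d: "den b (norm z) > 0"
  shows "f z \<noteq> 0" "norm (starq f z - 1) \<le> 1 - num b (norm z) / den b (norm z)"
proof -
  define r where "r = norm z"
  have r: "0 < r" "r < 1" using z by (auto simp: r_def)
  have ne: "1 - r \<noteq> 0" using r by auto
  have p3: "(1-r)^3 > 0" using r by simp
  have e1: "norm (f z - z) \<le> r/(1-r)^2 - r - (2-2*b)*r^2" using est1[OF f b z(2)] by (simp add: r_def)
  have e2: "norm (z * deriv f z - f z) \<le> 2*r^2/(1-r)^3 - (2-2*b)*r^2" using est2[OF f b z(2)] by (simp add: r_def)
  have Deq: "r - (r/(1-r)^2 - r - (2-2*b)*r^2) = r * den b r / (1-r)^3"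
    using ne by (simp add: den_def field_simps) (simp add: algebra_simps power2_eq_square power3_eq_cube)
  have Neq: "2*r^2/(1-r)^3 - (2-2*b)*r^2 = r * (den b r - num b r) / (1-r)^3"
    using ne by (simp add: den_def num_def field_simps) (simp add: algebra_simps power2_eq_square power3_eq_cube)
  have Dpos: "r * den b r / (1-r)^3 > 0" using r d p3 by (simp add: r_def)
  have "norm (f z) \<ge> norm z - norm (f z - z)" using norm_triangle_ineq2[of z "z - f z"]
    by (simp add: norm_minus_commute)
  hence fz: "norm (f z) \<ge> r * den b r / (1-r)^3" using e1 Deq by (simp add: r_def)
  thus "f z \<noteq> 0" using Dpos by auto
  have "starq f z - 1 = (z * deriv f z - f z) / f z" using z \<open>f z \<noteq> 0\<close>
    by (simp add: starq_def field_simps)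
  hence "norm (starq f z - 1) = norm (z * deriv f z - f z) / norm (f z)" by (simp add: norm_divide)
  also have "\<dots> \<le> (r * (den b r - num b r) / (1-r)^3) / (r * den b r / (1-r)^3)"
  proof (rule frac_le)
    show "0 \<le> r * (den b r - num b r) / (1-r)^3" using num_lt_den[OF b r] r p3 by simp
    show "norm (z * deriv f z - f z) \<le> r * (den b r - num b r) / (1-r)^3" using e2 Neq by simp
  qed (use Dpos fz in auto)
  also have "\<dots> = 1 - num b r / den b r" using r d p3 by (simp add: field_simps r_def)
  finally show "norm (starq f z - 1) \<le> 1 - num b (norm z) / den b (norm z)" by (simp add: r_def)
qed



lemma coeff_unique:
  fixes g :: "complex \<Rightarrow> complex"
  assumes s: "\<And>z. norm z < 1 \<Longrightarrow> (\<lambda>n. c n * z^n) sums g z"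
  shows "taylor_coeff g n = c n"
proof -
  have "g has_fps_expansion Abs_fps c"
    unfolding has_fps_expansion_def fps_conv_radius_def
  proof
    have "summable (\<lambda>n. c n * (1/2::complex)^n)" using s[of "1/2"] by (auto intro: sums_summable)
    hence "conv_radius c \<ge> ereal (norm (1/2::complex))" using conv_radius_geI by (metis fps_nth_Abs_fps)
    thus "0 < conv_radius (fps_nth (Abs_fps c))" by (simp add: less_le_trans[rotated])
    show "\<forall>\<^sub>F z in nhds 0. eval_fps (Abs_fps c) z = g z"
      unfolding eventually_nhds
    proof (intro exI[of _ "ball 0 1"] conjI ballI)
      fix z :: complex assume "z \<in> ball 0 1"
      hence "norm z < 1" by simp
      thus "eval_fps (Abs_fps c) z = g z" unfolding eval_fps_def using s by (simp add: sums_iff)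
    qed auto
  qed
  from fps_nth_fps_expansion[OF this, of n] show ?thesis by (simp add: taylor_coeff_def)
qed



definition c0 :: "real \<Rightarrow> nat \<Rightarrow> complex" where
  "c0 b n = (if n = 1 then 2 else 0) + (if n = 2 then 2 * complex_of_real (1-b) else 0) - of_nat n"

lemma sums_S1c:
  fixes z :: complex assumes "norm z < 1"
  shows "(\<lambda>n. of_nat n * z^n) sums (z/(1-z)^2)"
proof -
  have "(\<lambda>n. of_nat (Suc n) * z ^ n) sums (1 / (1 - z)^2)"
    by (rule geometric_deriv_sums) (use assms in auto)
  from sums_mult[OF this, of z]
  have "(\<lambda>n. of_nat (Suc n) * z ^ (Suc n)) sums (z/(1-z)^2)" by (simp add: algebra_simps)
  then show ?thesis by (subst (asm) sums_Suc_iff) simp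
qed

lemma f0_sums:
  assumes "norm z < 1"
  shows "(\<lambda>n. c0 b n * z^n) sums f0 b z"
proof -
  have s1: "(\<lambda>n. if n = 1 then 2 * z^n else 0) sums (2 * z)"
    using sums_single[of 1 "\<lambda>n. 2 * z^n"] by simp
  have s2: "(\<lambda>n. if n = 2 then 2 * complex_of_real (1-b) * z^n else 0) sums (2 * complex_of_real (1-b) * z^2)"
    using sums_single[of 2 "\<lambda>n. 2 * complex_of_real (1-b) * z^n"] by simp
  have "(\<lambda>n. (if n = 1 then 2 * z^n else 0) + (if n = 2 then 2 * complex_of_real (1-b) * z^n else 0)
           - of_nat n * z^n) sums (2 * z + 2 * complex_of_real (1-b) * z^2 - z/(1-z)^2)"
    by (intro sums_diff sums_add s1 s2 sums_S1c assms)
  moreover have "(\<lambda>n. (if n = 1 then 2 * z^n else 0) + (if n = 2 then 2 * complex_of_real (1-b) * z^n else 0)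
           - of_nat n * z^n) = (\<lambda>n. c0 b n * z^n)"
    by (auto simp: c0_def algebra_simps)
  ultimately show ?thesis by (simp add: f0_def)
qed

lemma f0_coeff: "taylor_coeff (f0 b) n = c0 b n"
  by (rule coeff_unique[OF f0_sums])

lemma f0_holo: "f0 b holomorphic_on ball 0 1"
proof -
  have "(1 - z)^2 \<noteq> 0" if "z \<in> ball 0 (1::real)" for z :: complex
    using that by auto
  then show ?thesis unfolding f0_def by (intro holomorphic_intros) auto
qed

lemma f0_classF:
  assumes "0 \<le> b" "b \<le> 1"
  shows "f0 b \<in> class_F b"
proof -
  have "f0 b 0 = 0" by (simp add: f0_def)
  moreover have "deriv (f0 b) 0 = 1"
    using f0_coeff[of b 1] by (simp add: taylor_coeff_def c0_def)
  moreover have "norm (taylor_coeff (f0 b) 2) = 2*b"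
  proof -
    have "taylor_coeff (f0 b) 2 = complex_of_real (-2*b)" by (simp add: f0_coeff c0_def)
    then show ?thesis using assms by simp
  qed
  moreover have "norm (taylor_coeff (f0 b) n) \<le> real n" if "n \<ge> 3" for n
  proof -
    have "taylor_coeff (f0 b) n = - of_nat n" using that by (simp add: f0_coeff c0_def)
    then show ?thesis by simp
  qed
  ultimately show ?thesis using f0_holo by (auto simp: class_F_def class_A_def)
qed



lemma f0_has_deriv:
  assumes "z \<noteq> 1"
  shows "(f0 b has_field_derivative (2 + 4 * complex_of_real (1-b) * z - (1+z)/(1-z)^3)) (at z)"
proof -
  have ne: "1 - z \<noteq> 0" using assms by auto
  have q: "((\<lambda>z. z/(1-z)^2) has_field_derivative ((1+z)/(1-z)^3)) (at z)"
    apply (rule derivative_eq_intros refl)+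
    using ne apply simp
    using ne apply (simp add: divide_simps)
    apply (simp add: algebra_simps power2_eq_square power3_eq_cube power4_eq_xxxx)
    done
  have p: "((\<lambda>z. 2 * z + 2 * complex_of_real (1 - b) * z ^ 2) has_field_derivative (2 + 4 * complex_of_real (1-b) * z)) (at z)"
    by (auto intro!: derivative_eq_intros)
  show ?thesis unfolding f0_def using DERIV_diff[OF p q] by simp
qed

lemma f0_real:
  fixes r :: real assumes "r \<noteq> 1"
  shows "f0 b (complex_of_real r) = complex_of_real (r * den b r / (1-r)^3)"
proof -
  have ne: "1 - r \<noteq> 0" using assms by auto
  have "f0 b (complex_of_real r) = complex_of_real (2*r + 2*(1-b)*r^2 - r/(1-r)^2)"
    by (simp add: f0_def)
  also have "2*r + 2*(1-b)*r^2 - r/(1-r)^2 = r * den b r / (1-r)^3"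
    using ne by (simp add: den_def field_simps) (simp add: algebra_simps power2_eq_square power3_eq_cube)
  finally show ?thesis .
qed

lemma f0'_real:
  fixes r :: real assumes "r \<noteq> 1"
  shows "deriv (f0 b) (complex_of_real r) = complex_of_real (num b r / (1-r)^3)"
proof -
  have ne: "1 - r \<noteq> 0" using assms by auto
  have "complex_of_real r \<noteq> 1" using assms by (metis of_real_1 of_real_eq_iff)
  from DERIV_imp_deriv[OF f0_has_deriv[OF this]]
  have "deriv (f0 b) (complex_of_real r) = complex_of_real (2 + 4*(1-b)*r - (1+r)/(1-r)^3)"
    by simp
  also have "2 + 4*(1-b)*r - (1+r)/(1-r)^3 = num b r / (1-r)^3"
    using ne by (simp add: num_def field_simps)
  finally show ?thesis .
qed

lemma starq_f0:
  fixes r :: real assumes "0 < r" "r < 1"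
  shows "starq (f0 b) (complex_of_real r) = complex_of_real (num b r / den b r)"
proof -
  have ne: "(1 - r)^3 \<noteq> 0" using assms by auto
  have "starq (f0 b) (complex_of_real r) = complex_of_real (r * (num b r / (1-r)^3) / (r * den b r / (1-r)^3))"
    using assms by (simp add: starq_def f0_real f0'_real)
  also have "r * (num b r / (1-r)^3) / (r * den b r / (1-r)^3) = num b r / den b r"
    using ne assms by (cases "den b r = 0") (simp_all add: field_simps)
  finally show ?thesis .
qed



lemma inside:
  assumes f: "f \<in> class_F b" and b: "0 \<le> b" "b \<le> 1" and a: "0 \<le> a" "a < 1"
    and z: "norm z < root_r0 b a"
  shows "(z \<noteq> 0 \<longrightarrow> f z \<noteq> 0) \<and> norm (starq f z - 1) < 1 - a"
proof (cases "z = 0")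
  case True then show ?thesis using a by (simp add: starq_def)
next
  case False
  note R = root_props[OF b a]
  have z1: "norm z < 1" using z R(2) by linarith
  have h: "hf b a (norm z) > 0" using R(4)[of "norm z"] z by simp
  have d: "den b (norm z) > 0" using den_pos[OF b a _ z1 less_imp_le[OF h]] False by simp
  show ?thesis using est_main[OF f b False z1 d] ratio_lt[OF d h] by auto
qed

lemma outside:
  assumes b: "0 \<le> b" "b \<le> 1" and a: "0 \<le> a" "a < 1"
    and r: "root_r0 b a < r" "r \<le> 1"
  shows "\<exists>x. 0 < x \<and> x < r \<and> x < 1 \<and> (f0 b (complex_of_real x) = 0 \<or> (den b x > 0 \<and> num b x / den b x < a))"
proof -
  note R = root_props[OF b a]
  define y where "y = (root_r0 b a + r) / 2"
  have y: "root_r0 b a < y" "y < r" "y < 1" using r by (auto simp: y_def)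
  have hy: "hf b a y < 0" using R(5)[of y] y by simp
  show ?thesis
  proof (cases "den b y > 0")
    case True
    have "num b y < a * den b y" using hy by (simp add: hf_eq)
    hence "num b y / den b y < a" using True by (simp add: divide_less_eq)
    then show ?thesis using True y R(1) by (intro exI[of _ y]) auto
  next
    case False
    have d0: "den b (root_r0 b a) > 0" using den_pos[OF b a R(1) R(2)] R(3) by simp
    have c: "continuous_on {root_r0 b a..y} (den b)" unfolding den_def by (intro continuous_intros)
    obtain x where x: "root_r0 b a \<le> x" "x \<le> y" "den b x = 0"
      using IVT2'[of "den b" y 0 "root_r0 b a", OF _ _ _ c] False d0 y by auto
    have "x \<noteq> root_r0 b a" using x d0 by auto
    hence x0: "0 < x" using x R(1) by linarith
    have "x \<noteq> 1" using x y by linarith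
    hence "f0 b (complex_of_real x) = 0" using x by (simp add: f0_real)
    then show ?thesis using x0 x y by (intro exI[of _ x]) auto
  qed
qed

lemma Re_ge: "Re (w::complex) \<ge> 1 - norm (w - 1)"
proof -
  have "\<bar>Re (w - 1)\<bar> \<le> norm (w - 1)" by (rule abs_Re_le_cmod)
  thus ?thesis by simp
qed

theorem theorem2p1:
  fixes b \<alpha> :: real
  assumes "0 \<le> b" "b \<le> 1" "0 \<le> \<alpha>" "\<alpha> < 1"
  shows "(\<forall>f\<in>class_F b. \<forall>z. norm z \<le> root_r0 b \<alpha> \<longrightarrow>
            norm (starq f z - 1) \<le> 1 - \<alpha>)
       \<and> radius_starlike_order (class_F b) \<alpha> = root_r0 b \<alpha>
       \<and> radius_parabolic (class_F b) = root_r0 b (1/2)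
       \<and> f0 b \<in> class_F b
       \<and> norm (starq (f0 b) (complex_of_real (root_r0 b \<alpha>)) - 1) = 1 - \<alpha>
       \<and> Re (starq (f0 b) (complex_of_real (root_r0 b \<alpha>))) = \<alpha>"
proof -
  note b = assms(1,2) and a = assms(3,4)
  have a2: "0 \<le> (1/2::real)" "(1/2::real) < 1" by auto
  note R = root_props[OF b a]
  note R2 = root_props[OF b a2]
  have F0: "f0 b \<in> class_F b" by (rule f0_classF[OF b])
  have P1: "\<forall>f\<in>class_F b. \<forall>z. norm z \<le> root_r0 b \<alpha> \<longrightarrow> norm (starq f z - 1) \<le> 1 - \<alpha>"
  proof (intro ballI allI impI)
    fix f and z :: complex assume f: "f \<in> class_F b" and z: "norm z \<le> root_r0 b \<alpha>"
    show "norm (starq f z - 1) \<le> 1 - \<alpha>"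
    proof (cases "z = 0")
      case True then show ?thesis using a by (simp add: starq_def)
    next
      case False
      have z1: "norm z < 1" using z R(2) by linarith
      have h: "hf b \<alpha> (norm z) \<ge> 0"
      proof (cases "norm z < root_r0 b \<alpha>")
        case True then show ?thesis using R(4)[of "norm z"] by simp
      next
        case False then have "norm z = root_r0 b \<alpha>" using z by linarith
        then show ?thesis using R(3) by simp
      qed
      have d: "den b (norm z) > 0" using den_pos[OF b a _ z1 h] False by simp
      show ?thesis using est_main(2)[OF f b False z1 d] ratio_le[OF d h] by linarith
    qed
  qed
  have P2: "radius_starlike_order (class_F b) \<alpha> = root_r0 b \<alpha>"
    unfolding radius_starlike_order_def
  proof (rule cSup_eq_maximum)
    show "root_r0 b \<alpha> \<in> {r. 0 < r \<and> r \<le> 1 \<and>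
     (\<forall>f\<in>class_F b. (\<forall>z. 0 < norm z \<and> norm z < r \<longrightarrow> f z \<noteq> 0) \<and>
             (\<forall>z. norm z < r \<longrightarrow> Re (starq f z) > \<alpha>))}"
      using R(1,2) inside[OF _ b a] Re_ge by (fastforce intro: less_le_trans[rotated])
  next
    fix r assume "r \<in> {r. 0 < r \<and> r \<le> 1 \<and>
     (\<forall>f\<in>class_F b. (\<forall>z. 0 < norm z \<and> norm z < r \<longrightarrow> f z \<noteq> 0) \<and>
             (\<forall>z. norm z < r \<longrightarrow> Re (starq f z) > \<alpha>))}"
    hence r: "0 < r" "r \<le> 1" and P: "\<And>z. 0 < norm z \<Longrightarrow> norm z < r \<Longrightarrow> f0 b z \<noteq> 0"
      "\<And>z. norm z < r \<Longrightarrow> Re (starq (f0 b) z) > \<alpha>" using F0 by auto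
    show "r \<le> root_r0 b \<alpha>"
    proof (rule ccontr)
      assume "\<not> r \<le> root_r0 b \<alpha>"
      then obtain x where x: "0 < x" "x < r" "x < 1"
        "f0 b (complex_of_real x) = 0 \<or> (den b x > 0 \<and> num b x / den b x < \<alpha>)"
        using outside[OF b a _ r(2)] by auto
      from x(4) show False
      proof
        assume "f0 b (complex_of_real x) = 0"
        then show False using P(1)[of "complex_of_real x"] x by simp
      next
        assume "den b x > 0 \<and> num b x / den b x < \<alpha>"
        then show False using P(2)[of "complex_of_real x"] x starq_f0[OF x(1,3)] by simp
      qed
    qed
  qed
  have P3: "radius_parabolic (class_F b) = root_r0 b (1/2)"
    unfolding radius_parabolic_def
  proof (rule cSup_eq_maximum)
    have "Re (starq f z) > norm (starq f z - 1)" if "f \<in> class_F b" "norm z < root_r0 b (1/2)" for f z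
    proof -
      have "norm (starq f z - 1) < 1/2" using inside[OF that(1) b a2 that(2)] by simp
      then show ?thesis using Re_ge[of "starq f z"] by linarith
    qed
    then show "root_r0 b (1/2) \<in> {r. 0 < r \<and> r \<le> 1 \<and>
     (\<forall>f\<in>class_F b. \<forall>z. norm z < r \<longrightarrow> Re (starq f z) > norm (starq f z - 1))}"
      using R2(1,2) by auto
  next
    fix r assume "r \<in> {r. 0 < r \<and> r \<le> 1 \<and>
     (\<forall>f\<in>class_F b. \<forall>z. norm z < r \<longrightarrow> Re (starq f z) > norm (starq f z - 1))}"
    hence r: "0 < r" "r \<le> 1" and P: "\<And>z. norm z < r \<Longrightarrow> Re (starq (f0 b) z) > norm (starq (f0 b) z - 1)"
      using F0 by auto
    show "r \<le> root_r0 b (1/2)"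
    proof (rule ccontr)
      assume "\<not> r \<le> root_r0 b (1/2)"
      then obtain x where x: "0 < x" "x < r" "x < 1"
        "f0 b (complex_of_real x) = 0 \<or> (den b x > 0 \<and> num b x / den b x < 1/2)"
        using outside[OF b a2 _ r(2)] by auto
      from x(4) show False
      proof
        assume "f0 b (complex_of_real x) = 0"
        hence "starq (f0 b) (complex_of_real x) = 0" using x by (simp add: starq_def)
        then show False using P[of "complex_of_real x"] x by simp
      next
        assume A: "den b x > 0 \<and> num b x / den b x < 1/2"
        define t where "t = num b x / den b x"
        have q: "starq (f0 b) (complex_of_real x) = complex_of_real t" using starq_f0[OF x(1,3)] by (simp add: t_def)
        have tl: "t < 1/2" using A by (simp add: t_def)
        have "norm (complex_of_real t - 1) = 1 - t"
        proof -
          have "complex_of_real t - 1 = complex_of_real (t - 1)" by simp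
          then show ?thesis using tl by (simp del: of_real_diff)
        qed
        then show False using P[of "complex_of_real x"] x q tl by simp
      qed
    qed
  qed
  have d0: "den b (root_r0 b \<alpha>) > 0" using den_pos[OF b a R(1) R(2)] R(3) by simp
  have "num b (root_r0 b \<alpha>) = \<alpha> * den b (root_r0 b \<alpha>)" using R(3) by (simp add: hf_eq)
  hence "num b (root_r0 b \<alpha>) / den b (root_r0 b \<alpha>) = \<alpha>" using d0 by simp
  hence Q: "starq (f0 b) (complex_of_real (root_r0 b \<alpha>)) = complex_of_real \<alpha>"
    using starq_f0[OF R(1) R(2), of b] by (simp del: of_real_divide)
  have N: "norm (complex_of_real \<alpha> - 1) = 1 - \<alpha>"
  proof -
    have "complex_of_real \<alpha> - 1 = complex_of_real (\<alpha> - 1)" by simp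
    then show ?thesis using a by (simp del: of_real_diff)
  qed
  show ?thesis using P1 P2 P3 F0 Q N by simp
qed

end
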